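(* Let $C$ be a maximal independent set of the Kneser graph $\Gamma$ of flags of type $\{2,3\}$ of $\mathrm{PG}(6,q)$. (i) For every saturated solid $S$ and every flag $(E',S')\in C$ we have $E'\cap S\neq\emptyset$. (ii) If $S$ is a solid with $S\cap E'\neq\emptyset$ for all flags $(E',S')\in C$, then $S$ is saturated. (iii) If $S$ and $S'$ are saturated solids, then $\dim(S\cap S')\ge 1$. (iv) If $H$ is a hyperplane with $E\subseteq H$ for all flags $(E,S)\in C$, then every solid of $H$ is saturated.
   Context: Dimensions are projective (planes 2, solids 3, hyperplanes 5). A flag of type $\{2,3\}$ is a pair $(E,S)$ of a plane $E$ and a solid $S$ with $E\subseteq S$; in $\Gamma$ distinct flags $(E,S),(E',S')$ are adjacent iff $E\cap S'=\emptyset$ and $E'\cap S=\emptyset$. A solid $S$ is saturated (for $C$) if $(E,S)\in C$ for all planes $E$ of $S$. *)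

theory Defs
  imports "HOL-Analysis.Analysis" "HOL-Library.Numeral_Type"
begin

text \<open>PG(6,q) is modelled as the lattice of subspaces of the 7-dimensional vector
space over a finite field 'a with q elements (q = CARD('a)).  A projective
subspace of projective dimension d is a vector subspace of vector dimension d+1.
Projective disjointness means the vector intersection is the zero space.\<close>

type_synonym 'a pt = "'a ^ 7"

definition psub :: "nat \<Rightarrow> ('a::field) pt set \<Rightarrow> bool" where
  "psub d U \<longleftrightarrow> vec.subspace U \<and> vec.dim U = d + 1"

abbreviation plane where "plane E \<equiv> psub 2 E"
abbreviation solid where "solid S \<equiv> psub 3 S"
abbreviation hyperplane where "hyperplane H \<equiv> psub 5 H"

definition pdisjoint :: "('a::field) pt set \<Rightarrow> 'a pt set \<Rightarrow> bool" where
  "pdisjoint U W \<longleftrightarrow> U \<inter> W = {0}"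

definition flags23 :: "(('a::field) pt set \<times> 'a pt set) set" where
  "flags23 = {(E, S). plane E \<and> solid S \<and> E \<subseteq> S}"

definition adjacent :: "(('a::field) pt set \<times> 'a pt set) \<Rightarrow> ('a pt set \<times> 'a pt set) \<Rightarrow> bool" where
  "adjacent F F' \<longleftrightarrow> F \<in> flags23 \<and> F' \<in> flags23 \<and> F \<noteq> F' \<and>
     pdisjoint (fst F) (snd F') \<and> pdisjoint (fst F') (snd F)"

definition independent :: "(('a::field) pt set \<times> 'a pt set) set \<Rightarrow> bool" where
  "independent C \<longleftrightarrow> C \<subseteq> flags23 \<and> (\<forall>F\<in>C. \<forall>F'\<in>C. \<not> adjacent F F')"

definition maximal_independent :: "(('a::field) pt set \<times> 'a pt set) set \<Rightarrow> bool" where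
  "maximal_independent C \<longleftrightarrow> independent C \<and>
     (\<forall>D. independent D \<and> C \<subseteq> D \<longrightarrow> D = C)"

definition saturated :: "(('a::field) pt set \<times> 'a pt set) set \<Rightarrow> 'a pt set \<Rightarrow> bool" where
  "saturated C S \<longleftrightarrow> solid S \<and> (\<forall>E. plane E \<and> E \<subseteq> S \<longrightarrow> (E, S) \<in> C)"

end

theory Submission
  imports Defs
begin

lemma dim_inter_bound:
  fixes A B V :: "('a::field) pt set"
  assumes "vec.subspace A" "vec.subspace B" "vec.subspace V" "A \<subseteq> V" "B \<subseteq> V"
  shows "vec.dim A + vec.dim B \<le> vec.dim (A \<inter> B) + vec.dim V"
proof -
  have "{x + y |x y. x \<in> A \<and> y \<in> B} \<subseteq> V"
    using assms by (auto intro: vec.subspace_add)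
  then have "vec.dim {x + y |x y. x \<in> A \<and> y \<in> B} \<le> vec.dim V" by (rule vec.dim_subset)
  then show ?thesis using vec.dim_sums_Int[OF assms(1,2)] by linarith
qed

lemma zero_iff:
  fixes U W :: "('a::field) pt set"
  assumes "vec.subspace U" "vec.subspace W"
  shows "U \<inter> W = {0} \<longleftrightarrow> vec.dim (U \<inter> W) = 0"
  using assms vec.subspace_0 by (auto simp: vec.dim_eq_0)

lemma avoid:
  fixes S M :: "('a::field) pt set"
  assumes S: "vec.subspace S" "vec.dim S = 4" and M: "vec.subspace M" "M \<subseteq> S" "vec.dim M \<le> 1"
  shows "\<exists>E. plane E \<and> E \<subseteq> S \<and> E \<inter> M = {0}"
proof -
  obtain B0 where B0: "B0 \<subseteq> M" "vec.independent B0" "M \<subseteq> vec.span B0" "card B0 = vec.dim M"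
    by (rule vec.basis_exists)
  have B0S: "B0 \<subseteq> S" using B0(1) M(2) by (rule order_trans)
  obtain B where B: "B0 \<subseteq> B" "B \<subseteq> S" "vec.independent B" "S \<subseteq> vec.span B"
    by (rule vec.maximal_independent_subset_extend[OF B0S B0(2)])
  have cB: "card B = 4" using vec.basis_card_eq_dim[OF B(2,4,3)] S(2) by simp
  have finB: "finite B" using B(3) by (rule vec.finiteI_independent)
  have finB0: "finite B0" using finB B(1) by (rule finite_subset[rotated])
  have "card (B - B0) = card B - card B0" using finB0 B(1) by (rule card_Diff_subset)
  then have "3 \<le> card (B - B0)" using cB B0(4) M(3) by linarith
  then obtain T where T: "T \<subseteq> B - B0" "card T = 3" "finite T"
    by (rule obtain_subset_with_card_n)
  have finT: "finite T" by (rule T(3))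
  have indT: "vec.independent T" using vec.independent_mono[OF B(3)] T by blast
  have indTB0: "vec.independent (T \<union> B0)" using vec.independent_mono[OF B(3)] T B(1) by blast
  define E where "E = vec.span T"
  have sE: "vec.subspace E" unfolding E_def by simp
  have dE: "vec.dim E = 3" unfolding E_def using vec.dim_span_eq_card_independent[OF indT] T by simp
  have ES: "E \<subseteq> S" unfolding E_def using T B(2) S(1) by (intro vec.span_minimal) auto
  have spB0: "vec.span B0 = M" using vec.span_subspace[OF B0(1,3) M(1)] .
  have sum_eq: "{x + y |x y. x \<in> E \<and> y \<in> M} = vec.span (T \<union> B0)"
    unfolding vec.span_Un E_def spB0 by simp
  have "vec.dim (vec.span (T \<union> B0)) = card (T \<union> B0)"
    using vec.dim_span_eq_card_independent[OF indTB0] .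
  also have "\<dots> = 3 + vec.dim M" using T B0(4) finT finB0 by (subst card_Un_disjoint) auto
  finally have dsum: "vec.dim {x + y |x y. x \<in> E \<and> y \<in> M} = 3 + vec.dim M"
    unfolding sum_eq .
  have "vec.dim (E \<inter> M) = 0"
    using vec.dim_sums_Int[OF sE M(1)] dsum dE by linarith
  then have "E \<inter> M = {0}" by (rule iffD2[OF zero_iff[OF sE M(1)]])
  moreover have "plane E" unfolding psub_def using sE dE by simp
  ultimately show ?thesis using ES by blast
qed

lemma part1:
  fixes C :: "(('a::field) pt set \<times> 'a pt set) set"
  assumes mi: "maximal_independent C" and sat: "saturated C S" and F: "(E', S') \<in> C"
  shows "\<not> pdisjoint E' S"
proof
  assume dj: "pdisjoint E' S"
  have ind: "independent C" using mi maximal_independent_def by blast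
  then have fl: "(E', S') \<in> flags23" using F independent_def by blast
  then have E': "vec.subspace E'" "vec.dim E' = 3" "E' \<subseteq> S'" and S': "vec.subspace S'" "vec.dim S' = 4"
    unfolding flags23_def psub_def by auto
  have S: "vec.subspace S" "vec.dim S = 4" using sat unfolding saturated_def psub_def by auto
  have sM: "vec.subspace (S \<inter> S')" using S S' vec.subspace_inter by blast
  have "(S \<inter> S') \<inter> E' = E' \<inter> S" using E' by auto
  moreover have "vec.dim (E' \<inter> S) = 0" using dj unfolding pdisjoint_def by (rule iffD1[OF zero_iff[OF E'(1) S(1)]])
  ultimately have d0: "vec.dim ((S \<inter> S') \<inter> E') = 0" by simp
  have "S \<inter> S' \<subseteq> S'" by blast
  from dim_inter_bound[OF sM E'(1) S'(1) this E'(3)] have "vec.dim (S \<inter> S') \<le> 1"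
    using d0 E'(2) S'(2) by linarith
  then obtain E where E: "plane E" "E \<subseteq> S" "E \<inter> (S \<inter> S') = {0}"
    using avoid[OF S sM] by blast
  have EC: "(E, S) \<in> C" using sat E unfolding saturated_def by blast
  have flE: "(E, S) \<in> flags23" using EC ind independent_def by blast
  have "E' \<noteq> E"
  proof
    assume "E' = E"
    then have "E' \<inter> S = E'" using E by auto
    moreover have "vec.dim (E' \<inter> S) = 0" using dj unfolding pdisjoint_def by (rule iffD1[OF zero_iff[OF E'(1) S(1)]])
    ultimately have "vec.dim E' = 0" by simp
    then show False using E' by simp
  qed
  then have "adjacent (E, S) (E', S')"
    unfolding adjacent_def pdisjoint_def using flE fl dj E(3) E(2)
    by (auto simp: pdisjoint_def)
  then show False using ind EC F unfolding independent_def by blast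
qed

lemma part2:
  fixes C :: "(('a::field) pt set \<times> 'a pt set) set"
  assumes mi: "maximal_independent C" and S: "solid S"
    and H: "\<forall>(E', S')\<in>C. \<not> pdisjoint S E'"
  shows "saturated C S"
  unfolding saturated_def
proof (intro conjI allI impI)
  show "solid S" by fact
  fix E assume E: "plane E \<and> E \<subseteq> S"
  have ind: "independent C" using mi maximal_independent_def by blast
  let ?D = "insert (E, S) C"
  have "(E, S) \<in> flags23" using E S unfolding flags23_def by auto
  moreover have "\<not> adjacent F F'" if "F \<in> ?D" "F' \<in> ?D" for F F'
  proof
    assume adj: "adjacent F F'"
    show False
    proof (cases "F = (E, S)")
      case True
      then have "F' \<noteq> (E, S)" using adj adjacent_def by blast
      then have "F' \<in> C" using that by auto
      then show False using H adj True unfolding adjacent_def pdisjoint_def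
        by (cases F') (auto simp: Int_commute)
    next
      case False
      then have FC: "F \<in> C" using that by auto
      show ?thesis
      proof (cases "F' = (E, S)")
        case True
        then show False using H adj FC unfolding adjacent_def pdisjoint_def
          by (cases F) (auto simp: Int_commute)
      next
        case False
        then have "F' \<in> C" using that by auto
        then show False using ind FC adj unfolding independent_def by blast
      qed
    qed
  qed
  ultimately have "independent ?D" using ind unfolding independent_def by blast
  then have "?D = C" using mi unfolding maximal_independent_def by blast
  then show "(E, S) \<in> C" by blast
qed

theorem lemma6p3:
  fixes C :: "(('a::{field,finite}) pt set \<times> 'a pt set) set"
  assumes "maximal_independent C"
  shows "(\<forall>S. saturated C S \<longrightarrow> (\<forall>(E', S')\<in>C. \<not> pdisjoint E' S))
    \<and> (\<forall>S. solid S \<and> (\<forall>(E', S')\<in>C. \<not> pdisjoint S E') \<longrightarrow> saturated C S)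
    \<and> (\<forall>S S'. saturated C S \<and> saturated C S' \<longrightarrow> vec.dim (S \<inter> S') \<ge> 2)
    \<and> (\<forall>H. hyperplane H \<and> (\<forall>(E, S)\<in>C. E \<subseteq> H) \<longrightarrow>
          (\<forall>S. solid S \<and> S \<subseteq> H \<longrightarrow> saturated C S))"
proof (intro conjI allI impI)
  fix S assume "saturated C S"
  then show "\<forall>(E', S')\<in>C. \<not> pdisjoint E' S" using part1[OF assms] by blast
next
  fix S assume "solid S \<and> (\<forall>(E', S')\<in>C. \<not> pdisjoint S E')"
  then show "saturated C S" using part2[OF assms] by blast
next
  fix S S' assume sat: "saturated C S \<and> saturated C S'"
  show "vec.dim (S \<inter> S') \<ge> 2"
  proof (rule ccontr)
    assume "\<not> vec.dim (S \<inter> S') \<ge> 2"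
    then have d: "vec.dim (S \<inter> S') \<le> 1" by simp
    have S: "vec.subspace S" "vec.dim S = 4" using sat unfolding saturated_def psub_def by auto
    have S': "vec.subspace S'" using sat unfolding saturated_def psub_def by auto
    have sM: "vec.subspace (S \<inter> S')" using S S' vec.subspace_inter by blast
    obtain E where E: "plane E" "E \<subseteq> S" "E \<inter> (S \<inter> S') = {0}"
      using avoid[OF S sM _ d] by blast
    have EC: "(E, S) \<in> C" using sat E unfolding saturated_def by blast
    have "E \<inter> S' = {0}" using E by auto
    then show False using part1[OF assms _ EC] sat unfolding pdisjoint_def by blast
  qed
next
  fix H S assume H: "hyperplane H \<and> (\<forall>(E, S)\<in>C. E \<subseteq> H)" and S: "solid S \<and> S \<subseteq> H"
  have ind: "independent C" using assms maximal_independent_def by blast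
  have "\<not> pdisjoint S E'" if F: "(E', S') \<in> C" for E' S'
  proof
    assume dj: "pdisjoint S E'"
    have "(E', S') \<in> flags23" using F ind independent_def by blast
    then have E': "vec.subspace E'" "vec.dim E' = 3" unfolding flags23_def psub_def by auto
    have "E' \<subseteq> H" using H F by blast
    then have "vec.dim S + vec.dim E' \<le> vec.dim (S \<inter> E') + vec.dim H"
      using dim_inter_bound[of S E' H] S H E' unfolding psub_def by blast
    moreover have "vec.subspace S" using S unfolding psub_def by blast
    moreover have "vec.dim (S \<inter> E') = 0" using dj unfolding pdisjoint_def by (rule iffD1[OF zero_iff[OF \<open>vec.subspace S\<close> E'(1)]])
    ultimately show False using S H E' unfolding psub_def by simp
  qed
  then show "saturated C S" using part2[OF assms] S by blast
qed

end
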